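(* Let $2\le n<d$ with $n=2$ or $n$ odd, let $t$ be as defined below, let $E\in\mathrm{SL}(d,q)$ and $T:=E^{-1}tE$. If $T$ is a weak doubling element, then $V_n+V_nT=V_n+V_nT^{-1}$.
   Context: Vectors are row vectors and matrices act from the right; $\mathrm{Fix}(g)=\{x\in\mathbb{F}_q^d: xg=x\}$. $e_1,\dots,e_d$ is the standard basis of $V=\mathbb{F}_q^d$, $V_n=\langle e_1,\dots,e_n\rangle$, $F_{d-n}=\langle e_{n+1},\dots,e_d\rangle$, and $n'=\min\{2n-1,d\}$. An element $c\in\mathrm{GL}(d,q)$ is a weak doubling element if (C1) $\dim(V_n+V_nc)=n'$ and (C2) if $n'<d$ then $\dim(F_{d-n}+\mathrm{Fix}(c))=d$. $E_{i,j}(\lambda)$ is the identity matrix with $(i,j)$ entry replaced by $\lambda$ ($i\ne j$). Here $q=p^f$. The element $t$ is: $E_{1,2}(1)$ if $n=2$; $\operatorname{diag}(z_1,I_{d-n})$ if $n>2$ and $p=2$; $\operatorname{diag}(z_2,I_{d-n})$ if $n>2$ and $p$ odd, where ($P_\sigma$ being the $n\times n$ matrix with $e_iP_\sigma=e_{\sigma(i)}$) $z_1=P_{(1,n,n-1,\dots,2)}$ with $(1,n)$ entry changed to $-1$ if $n$ is even, and $z_2=P_{(2,n,n-1,\dots,3)}$ with $(2,n)$ entry changed to $-1$ if $n$ is odd. *)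

theory Defs
  imports "HOL-Analysis.Analysis"
begin

text \<open>The field F_q is a finite field type 'a::{field,finite}, its
characteristic p is CHAR('a).  V = F_q^d is the Cartesian vector type 'a^'d with
d = CARD('d); the standard basis e_1,...,e_d is indexed through a bijection
iota from {1..d} onto the index type 'd.  Vectors are row vectors and matrices
act from the right: xg is  x v* g.\<close>

definition std_basis :: "(nat \<Rightarrow> 'd::finite) \<Rightarrow> nat \<Rightarrow> 'a::field ^ 'd" where
  "std_basis \<iota> i = axis (\<iota> i) 1"

definition Vsub :: "(nat \<Rightarrow> 'd::finite) \<Rightarrow> nat \<Rightarrow> ('a::field ^ 'd) set" where
  "Vsub \<iota> n = vec.span (std_basis \<iota> ` {1..n})"

definition Fsub :: "(nat \<Rightarrow> 'd::finite) \<Rightarrow> nat \<Rightarrow> ('a::field ^ 'd) set" where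
  "Fsub \<iota> n = vec.span (std_basis \<iota> ` {n+1..CARD('d)})"

definition img :: "('a::field ^ 'd) set \<Rightarrow> 'a ^ 'd ^ 'd \<Rightarrow> ('a ^ 'd) set" where
  "img W g = (\<lambda>x. x v* g) ` W"

definition ssum :: "('a::field ^ 'd) set \<Rightarrow> ('a ^ 'd) set \<Rightarrow> ('a ^ 'd) set" where
  "ssum A B = {a + b | a b. a \<in> A \<and> b \<in> B}"

definition Fix :: "'a::field ^ 'd ^ 'd \<Rightarrow> ('a ^ 'd) set" where
  "Fix g = {x. x v* g = x}"

definition nprime :: "nat \<Rightarrow> nat \<Rightarrow> nat" where
  "nprime n d = min (2 * n - 1) d"

definition weak_doubling :: "(nat \<Rightarrow> 'd::finite) \<Rightarrow> nat \<Rightarrow> 'a::field ^ 'd ^ 'd \<Rightarrow> bool" where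
  "weak_doubling \<iota> n c \<longleftrightarrow>
     invertible c \<and>
     vec.dim (ssum (Vsub \<iota> n) (img (Vsub \<iota> n) c)) = nprime n CARD('d) \<and>
     (nprime n CARD('d) < CARD('d) \<longrightarrow>
        vec.dim (ssum (Fsub \<iota> n) (Fix c)) = CARD('d))"

text \<open>Matrices indexed by positive naturals (1-based, as in the paper).
  Permutation matrix P_sigma: e_i P_sigma = e_{sigma i}, i.e. entry (i,j) is 1 iff j = sigma i.\<close>
definition perm_mat_nat :: "(nat \<Rightarrow> nat) \<Rightarrow> nat \<Rightarrow> nat \<Rightarrow> 'a::field" where
  "perm_mat_nat \<sigma> i j = (if j = \<sigma> i then 1 else 0)"

definition cyc1 :: "nat \<Rightarrow> nat \<Rightarrow> nat" where
  "cyc1 n i = (if i = 1 then n else i - 1)"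

definition cyc2 :: "nat \<Rightarrow> nat \<Rightarrow> nat" where
  "cyc2 n i = (if i = 1 then 1 else if i = 2 then n else i - 1)"

definition z1 :: "nat \<Rightarrow> nat \<Rightarrow> nat \<Rightarrow> 'a::field" where
  "z1 n i j = (if even n \<and> i = 1 \<and> j = n then - 1 else perm_mat_nat (cyc1 n) i j)"

definition z2 :: "nat \<Rightarrow> nat \<Rightarrow> nat \<Rightarrow> 'a::field" where
  "z2 n i j = (if odd n \<and> i = 2 \<and> j = n then - 1 else perm_mat_nat (cyc2 n) i j)"

definition t_nat :: "nat \<Rightarrow> nat \<Rightarrow> nat \<Rightarrow> 'a::field" where
  "t_nat n i j =
    (if n = 2 then (if i = j then 1 else if i = 1 \<and> j = 2 then 1 else 0)
     else if i \<le> n \<and> j \<le> n then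
       (if CHAR('a) = 2 then z1 n i j else z2 n i j)
     else if n < i \<and> n < j then (if i = j then 1 else 0)
     else 0)"

definition mat_of :: "(nat \<Rightarrow> 'd::finite) \<Rightarrow> (nat \<Rightarrow> nat \<Rightarrow> 'a) \<Rightarrow> 'a ^ 'd ^ 'd" where
  "mat_of \<iota> M = (\<chi> a b. M (inv_into {1..CARD('d)} \<iota> a) (inv_into {1..CARD('d)} \<iota> b))"

definition t_elem :: "(nat \<Rightarrow> 'd::finite) \<Rightarrow> nat \<Rightarrow> 'a::field ^ 'd ^ 'd" where
  "t_elem \<iota> n = mat_of \<iota> (t_nat n)"

end

theory Submission
  imports Defs
begin


lemma lin: "Vector_Spaces.linear (*s) (*s) (\<lambda>x::'a::field^'n. x v* M)"
proof -
  have "(\<lambda>x::'a::field^'n. x v* M) = (*v) (transpose M)" by (auto simp: fun_eq_iff)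
  then show ?thesis by simp
qed

lemma inv_facts:
  fixes T :: "'a::field^'n^'n"
  assumes "invertible T"
  shows "T ** matrix_inv T = mat 1" "matrix_inv T ** T = mat 1"
  using someI_ex[OF assms[unfolded invertible_def]] unfolding matrix_inv_def by auto

lemma inv_vec:
  fixes T :: "'a::field^'n^'n"
  assumes "invertible T"
  shows "(x v* T) v* matrix_inv T = x" "(x v* matrix_inv T) v* T = x"
  using inv_facts[OF assms] by (simp_all add: vector_matrix_mul_assoc)

lemma img_subspace:
  fixes V :: "('a::field^'n) set"
  assumes "vec.subspace V" shows "vec.subspace (img V M)"
  unfolding img_def by (rule vec.linear_subspace_image[OF lin assms])

lemma ssum_subspace:
  assumes "vec.subspace A" "vec.subspace B" shows "vec.subspace (ssum A B)"
  unfolding ssum_def by (rule vec.subspace_sums[OF assms])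

lemma core:
  fixes V W :: "('a::field^'d) set" and T :: "'a^'d^'d"
  assumes sV: "vec.subspace V" and sW: "vec.subspace W"
    and dV: "vec.dim V \<le> n" and dW: "vec.dim W + 1 \<le> n"
    and iT: "invertible T"
    and TW: "\<And>y. y v* T - y \<in> W"
    and dA: "vec.dim (ssum V (img V T)) = min (2*n-1) CARD('d)"
  shows "ssum V (img V T) = ssum V (img V (matrix_inv T))"
proof -
  define A where "A = ssum V (img V T)"
  define B where "B = ssum V (img V (matrix_inv T))"
  define S where "S = ssum V W"
  have sA: "vec.subspace A" unfolding A_def by (intro ssum_subspace img_subspace sV)
  have sB: "vec.subspace B" unfolding B_def by (intro ssum_subspace img_subspace sV)
  have sS: "vec.subspace S" unfolding S_def by (intro ssum_subspace sV sW)
  have AS: "A \<subseteq> S"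
  proof
    fix z assume "z \<in> A"
    then obtain a b where ab: "a \<in> V" "b \<in> V" "z = a + b v* T"
      unfolding A_def ssum_def img_def by auto
    have "z = (a + b) + (b v* T - b)" using ab by simp
    moreover have "a + b \<in> V" using ab sV by (simp add: vec.subspace_add)
    ultimately show "z \<in> S" unfolding S_def ssum_def using TW by blast
  qed
  have BS: "B \<subseteq> S"
  proof
    fix z assume "z \<in> B"
    then obtain a b where ab: "a \<in> V" "b \<in> V" "z = a + b v* matrix_inv T"
      unfolding B_def ssum_def img_def by auto
    have "(b v* matrix_inv T) v* T - b v* matrix_inv T \<in> W" by (rule TW)
    then have "b - b v* matrix_inv T \<in> W" using inv_vec(2)[OF iT] by simp
    then have w: "b v* matrix_inv T - b \<in> W" using vec.subspace_neg[OF sW] by fastforce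
    have "z = (a + b) + (b v* matrix_inv T - b)" using ab by simp
    moreover have "a + b \<in> V" using ab sV by (simp add: vec.subspace_add)
    ultimately show "z \<in> S" unfolding S_def ssum_def using w by blast
  qed
  have "vec.dim S \<le> vec.dim V + vec.dim W"
    using vec.dim_sums_Int[OF sV sW] unfolding S_def ssum_def by linarith
  moreover have "vec.dim S \<le> CARD('d)" by (rule dim_subset_UNIV_cart_gen)
  ultimately have "vec.dim S \<le> vec.dim A" using dV dW dA unfolding A_def by linarith
  then have "vec.span A = vec.span S" using vec.dim_eq_span[OF AS] by simp
  then have SA: "S = A" using sA sS by (metis vec.span_eq_iff)
  have BA: "(\<lambda>x. x v* matrix_inv T) ` A = B"
  proof -
    have "(\<lambda>x. x v* matrix_inv T) ` A \<subseteq> B"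
    proof
      fix z assume "z \<in> (\<lambda>x. x v* matrix_inv T) ` A"
      then obtain a b where ab: "a \<in> V" "b \<in> V" "z = (a + b v* T) v* matrix_inv T"
        unfolding A_def ssum_def img_def by auto
      then have "z = b + a v* matrix_inv T" using inv_vec(1)[OF iT]
        by (simp add: vector_matrix_left_distrib)
      then show "z \<in> B" unfolding B_def ssum_def img_def using ab by blast
    qed
    moreover have "B \<subseteq> (\<lambda>x. x v* matrix_inv T) ` A"
    proof
      fix z assume "z \<in> B"
      then obtain a b where ab: "a \<in> V" "b \<in> V" "z = a + b v* matrix_inv T"
        unfolding B_def ssum_def img_def by auto
      have "(b + a v* T) v* matrix_inv T = z" using ab inv_vec(1)[OF iT]
        by (simp add: vector_matrix_left_distrib)
      moreover have "b + a v* T \<in> A" unfolding A_def ssum_def img_def using ab by blast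
      ultimately show "z \<in> (\<lambda>x. x v* matrix_inv T) ` A" by blast
    qed
    ultimately show ?thesis by blast
  qed
  have inj: "inj (\<lambda>x. x v* matrix_inv T)"
    by (rule inj_on_inverseI[where g = "\<lambda>x. x v* T"]) (simp add: inv_vec(2)[OF iT])
  have "vec.dim B = vec.dim A"
    using vec.dim_image_eq[OF lin, of "matrix_inv T" A] inj BA by (simp add: inj_on_def)
  then have "vec.span B = vec.span A" using vec.dim_eq_span[of B A] BS SA by simp
  then have "A = B" using sA sB by (metis vec.span_eq_iff)
  then show ?thesis unfolding A_def B_def .
qed



lemma t_col1:
  assumes "1 \<le> k" "2 \<le> n" "n = 2 \<or> CHAR('a::field) \<noteq> 2"
  shows "(t_nat n k 1 :: 'a) = (if k = 1 then 1 else 0)"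
proof (cases "n = 2")
  case True then show ?thesis by (simp add: t_nat_def)
next
  case False
  then have c: "CHAR('a) \<noteq> 2" and n3: "3 \<le> n" using assms by auto
  show ?thesis
  proof (cases "k \<le> n")
    case True
    then have "(t_nat n k 1 :: 'a) = z2 n k 1" using False c n3 by (simp add: t_nat_def)
    also have "\<dots> = perm_mat_nat (cyc2 n) k 1" using n3 by (simp add: z2_def)
    also have "\<dots> = (if k = 1 then 1 else 0)" using n3 assms(1)
      by (auto simp: perm_mat_nat_def cyc2_def)
    finally show ?thesis .
  next
    case False
    then show ?thesis using n3 by (simp add: t_nat_def)
  qed
qed

lemma t_high:
  assumes "2 \<le> n" "n < j"
  shows "(t_nat n k j :: 'a::field) = (if k = j then 1 else 0)"
  using assms by (simp add: t_nat_def)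

lemma tcol_high:
  assumes "2 \<le> n" "n < j" "j \<le> d"
  shows "(\<Sum>k=1..d. a k * (t_nat n k j :: 'a::field)) = a j"
proof -
  have "(\<Sum>k=1..d. a k * (t_nat n k j :: 'a)) = (\<Sum>k=1..d. if k = j then a k else 0)"
    using assms by (intro sum.cong refl) (simp add: t_high)
  also have "\<dots> = a j" using assms by (simp add: sum.delta)
  finally show ?thesis .
qed

lemma tcol_one:
  assumes "2 \<le> n" "n < d" "n = 2 \<or> CHAR('a::field) \<noteq> 2"
  shows "(\<Sum>k=1..d. a k * (t_nat n k 1 :: 'a)) = a 1"
proof -
  have "(\<Sum>k=1..d. a k * (t_nat n k 1 :: 'a)) = (\<Sum>k=1..d. if k = 1 then a k else 0)"
  proof (intro sum.cong refl)
    fix k assume "k \<in> {1..d}"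
    then have "(t_nat n k 1 :: 'a) = (if k = 1 then 1 else 0)" using assms by (intro t_col1) auto
    then show "a k * (t_nat n k 1 :: 'a) = (if k = 1 then a k else 0)" by simp
  qed
  also have "\<dots> = a 1" using assms by (simp add: sum.delta)
  finally show ?thesis .
qed

lemma tcol_sum:
  assumes "3 \<le> n" "n < d" "odd n" "CHAR('a::field) = 2"
  shows "(\<Sum>j=1..n. \<Sum>k=1..d. a k * (t_nat n k j :: 'a)) = (\<Sum>j=1..n. a j)"
proof -
  have "(\<Sum>j=1..n. \<Sum>k=1..d. a k * (t_nat n k j :: 'a)) = (\<Sum>k=1..d. a k * (\<Sum>j=1..n. t_nat n k j))"
    unfolding sum_distrib_left by (rule sum.swap)
  also have "\<dots> = (\<Sum>k=1..d. if k \<le> n then a k else 0)"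
  proof (intro sum.cong refl)
    fix k assume k: "k \<in> {1..d}"
    show "a k * (\<Sum>j=1..n. t_nat n k j) = (if k \<le> n then a k else 0)"
    proof (cases "k \<le> n")
      case True
      have "(\<Sum>j=1..n. (t_nat n k j :: 'a)) = (\<Sum>j=1..n. if j = cyc1 n k then 1 else 0)"
        using assms True k by (intro sum.cong) (auto simp: t_nat_def z1_def perm_mat_nat_def)
      also have "\<dots> = 1" using True k assms by (auto simp: cyc1_def)
      finally show ?thesis using True by simp
    next
      case False
      have "(\<Sum>j=1..n. (t_nat n k j :: 'a)) = 0"
        by (intro sum.neutral) (use False assms in \<open>auto simp: t_nat_def\<close>)
      then show ?thesis using False by simp
    qed
  qed
  also have "\<dots> = (\<Sum>j=1..n. a j)"
  proof -
    have "{1..d} = {1..n} \<union> {n+1..d}" using assms by auto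
    then show ?thesis by (simp add: sum.union_disjoint)
  qed
  finally show ?thesis .
qed



lemma coord:
  fixes \<iota> :: "nat \<Rightarrow> 'd::finite" and x :: "'a::field^'d"
  assumes bij: "bij_betw \<iota> {1..CARD('d)} (UNIV :: 'd set)" and j: "j \<in> {1..CARD('d)}"
  shows "(x v* mat_of \<iota> M) $ \<iota> j = (\<Sum>k=1..CARD('d). x $ \<iota> k * M k j)"
proof -
  have inj: "inj_on \<iota> {1..CARD('d)}" using bij by (rule bij_betw_imp_inj_on)
  have "(x v* mat_of \<iota> M) $ \<iota> j = (\<Sum>i\<in>UNIV. x $ i * mat_of \<iota> M $ i $ \<iota> j)"
    by (simp add: vector_matrix_mult_def)
  also have "\<dots> = (\<Sum>k=1..CARD('d). x $ \<iota> k * mat_of \<iota> M $ \<iota> k $ \<iota> j)"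
    by (rule sum.reindex_bij_betw[OF bij, symmetric])
  also have "\<dots> = (\<Sum>k=1..CARD('d). x $ \<iota> k * M k j)"
    using inj j by (intro sum.cong refl) (simp add: mat_of_def inv_into_f_f)
  finally show ?thesis .
qed

lemma Vsub_char:
  fixes \<iota> :: "nat \<Rightarrow> 'd::finite" and y :: "'a::field^'d"
  assumes bij: "bij_betw \<iota> {1..CARD('d)} (UNIV :: 'd set)"
    and z: "\<And>j. j \<in> {n+1..CARD('d)} \<Longrightarrow> y $ \<iota> j = 0"
  shows "y \<in> Vsub \<iota> n"
proof -
  have inj: "inj_on \<iota> {1..CARD('d)}" using bij by (rule bij_betw_imp_inj_on)
  have eq: "y = (\<Sum>j\<in>{1..min n CARD('d)}. (y $ \<iota> j) *s std_basis \<iota> j)"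
  proof (subst vec_eq_iff, intro allI)
    fix i :: 'd
    obtain k where k: "k \<in> {1..CARD('d)}" "i = \<iota> k" using bij by (metis bij_betw_iff_bijections UNIV_I)
    have "(\<Sum>j\<in>{1..min n CARD('d)}. (y $ \<iota> j) *s std_basis \<iota> j) $ i
        = (\<Sum>j\<in>{1..min n CARD('d)}. if j = k then y $ \<iota> j else 0)"
      unfolding sum_component
    proof (intro sum.cong refl)
      fix j assume "j \<in> {1..min n CARD('d)}"
      then have "j \<in> {1..CARD('d)}" by auto
      then have "(\<iota> j = \<iota> k) = (j = k)" using inj k(1) by (auto dest: inj_onD)
      then show "((y $ \<iota> j) *s std_basis \<iota> j) $ i = (if j = k then y $ \<iota> j else 0)"
        using k by (auto simp: std_basis_def axis_def)
    qed
    also have "\<dots> = y $ i"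
    proof (cases "k \<le> n")
      case True then show ?thesis using k by simp
    next
      case False then show ?thesis using k z[of k] by simp
    qed
    finally show "y $ i = (\<Sum>j\<in>{1..min n CARD('d)}. (y $ \<iota> j) *s std_basis \<iota> j) $ i" by simp
  qed
  have "(\<Sum>j\<in>{1..min n CARD('d)}. (y $ \<iota> j) *s std_basis \<iota> j) \<in> Vsub \<iota> n"
    unfolding Vsub_def
    by (intro vec.span_sum vec.span_scale vec.span_base) auto
  then show ?thesis using eq by simp
qed


lemma dimU:
  fixes \<iota> :: "nat \<Rightarrow> 'd::finite"
  assumes bij: "bij_betw \<iota> {1..CARD('d)} (UNIV :: 'd set)"
    and n2: "2 \<le> n" and nd: "n < CARD('d)" and nodd: "n = 2 \<or> odd n"
  shows "vec.dim (range (\<lambda>x::'a::field^'d. x v* t_elem \<iota> n - x)) + 1 \<le> n"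
proof -
  let ?t = "t_elem \<iota> n :: 'a^'d^'d"
  define U where "U = range (\<lambda>x::'a^'d. x v* ?t - x)"
  define G where "G = (if n = 2 \<or> CHAR('a) \<noteq> 2 then {1} else {1..n})"
  define g where "g y = (\<Sum>j\<in>G. y $ \<iota> j)" for y :: "'a^'d"
  have inj: "inj_on \<iota> {1..CARD('d)}" using bij by (rule bij_betw_imp_inj_on)
  have G1: "1 \<in> G" "G \<subseteq> {1..CARD('d)}" using n2 nd by (auto simp: G_def)
  have sU: "vec.subspace U"
  proof -
    have "U = (\<lambda>x. x v* (?t - mat 1)) ` UNIV" by (simp add: U_def vector_matrix_mult_diff_rdistrib)
    then show ?thesis using vec.linear_subspace_image[OF lin vec.subspace_UNIV] by simp
  qed
  have hi: "(x v* ?t) $ \<iota> j = x $ \<iota> j" if "j \<in> {n+1..CARD('d)}" for x j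
  proof -
    have "(x v* ?t) $ \<iota> j = (\<Sum>k=1..CARD('d). x $ \<iota> k * t_nat n k j)"
      unfolding t_elem_def using that n2 by (intro coord[OF bij]) auto
    also have "\<dots> = x $ \<iota> j" using that n2 by (intro tcol_high) auto
    finally show ?thesis .
  qed
  have gz: "g (x v* ?t - x) = 0" for x
  proof -
    have "g (x v* ?t) = g x"
    proof (cases "n = 2 \<or> CHAR('a) \<noteq> 2")
      case True
      then have G: "G = {1}" by (simp add: G_def)
      have "(x v* ?t) $ \<iota> 1 = (\<Sum>k=1..CARD('d). x $ \<iota> k * t_nat n k 1)"
        unfolding t_elem_def using nd by (intro coord[OF bij]) auto
      also have "\<dots> = x $ \<iota> 1" using True n2 nd by (intro tcol_one) auto
      finally show ?thesis by (simp add: g_def G)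
    next
      case False
      then have G: "G = {1..n}" and o: "odd n" "3 \<le> n" "CHAR('a) = 2"
        using nodd n2 by (auto simp: G_def)
      have "g (x v* ?t) = (\<Sum>j=1..n. \<Sum>k=1..CARD('d). x $ \<iota> k * t_nat n k j)"
        unfolding g_def G t_elem_def using nd by (intro sum.cong refl coord[OF bij]) auto
      also have "\<dots> = (\<Sum>j=1..n. x $ \<iota> j)" using o nd by (intro tcol_sum) auto
      finally show ?thesis by (simp add: g_def G)
    qed
    then show ?thesis by (simp add: g_def sum_subtractf)
  qed
  have UV: "U \<subseteq> Vsub \<iota> n"
  proof
    fix y assume "y \<in> U"
    then obtain x where x: "y = x v* ?t - x" by (auto simp: U_def)
    show "y \<in> Vsub \<iota> n" by (rule Vsub_char[OF bij]) (simp add: x hi)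
  qed
  have e1V: "std_basis \<iota> 1 \<in> Vsub \<iota> n"
    unfolding Vsub_def using n2 by (intro vec.span_base) auto
  have ge1: "g (std_basis \<iota> 1) = (1::'a)"
  proof -
    have "g (std_basis \<iota> 1) = (\<Sum>j\<in>G. if j = 1 then 1 else 0)"
      unfolding g_def
    proof (intro sum.cong refl)
      fix j assume "j \<in> G"
      then have "(\<iota> j = \<iota> 1) = (j = 1)" using G1 inj by (auto dest: inj_onD)
      then show "std_basis \<iota> 1 $ \<iota> j = (if j = 1 then 1 else (0::'a))"
        by (auto simp: std_basis_def axis_def)
    qed
    also have "\<dots> = 1" using G1 by (simp add: G_def split: if_splits)
    finally show ?thesis .
  qed
  have "std_basis \<iota> 1 \<notin> U" using gz ge1 by (auto simp: U_def)
  then have psub: "U \<subset> Vsub \<iota> n" using UV e1V by blast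
  have h1: "vec.span U = U" using sU by (simp add: vec.span_eq_iff)
  have h2: "vec.span (Vsub \<iota> n) = Vsub \<iota> n" by (simp add: Vsub_def)
  have "vec.span U \<subset> vec.span (Vsub \<iota> n)"
    by (simp only: h1 h2 psub)
  then have "vec.dim U < vec.dim (Vsub \<iota> n :: ('a^'d) set)" by (rule vec.dim_psubset)
  moreover have "vec.dim (Vsub \<iota> n :: ('a^'d) set) \<le> n"
  proof -
    have "vec.dim (Vsub \<iota> n :: ('a^'d) set) \<le> card (std_basis \<iota> ` {1..n} :: ('a^'d) set)"
      unfolding Vsub_def vec.dim_span by (rule vec.dim_le_card[OF vec.span_superset]) auto
    also have "\<dots> \<le> n" using card_image_le[of "{1..n}" "std_basis \<iota>"] by simp
    finally show ?thesis .
  qed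
  ultimately show ?thesis unfolding U_def by linarith
qed

theorem mainTheorem5:
  fixes \<iota> :: "nat \<Rightarrow> 'd::finite" and n :: nat and E :: "'a::{field,finite} ^ 'd ^ 'd"
  assumes "bij_betw \<iota> {1..CARD('d)} (UNIV :: 'd set)"
    and "2 \<le> n" and "n < CARD('d)" and "n = 2 \<or> odd n"
    and "det E = 1"
    and "weak_doubling \<iota> n (matrix_inv E ** t_elem \<iota> n ** E)"
  shows "ssum (Vsub \<iota> n) (img (Vsub \<iota> n) (matrix_inv E ** t_elem \<iota> n ** E))
       = ssum (Vsub \<iota> n) (img (Vsub \<iota> n) (matrix_inv (matrix_inv E ** t_elem \<iota> n ** E)))"
proof -
  let ?t = "t_elem \<iota> n :: 'a^'d^'d"
  let ?T = "matrix_inv E ** ?t ** E"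
  define U where "U = range (\<lambda>x::'a^'d. x v* ?t - x)"
  define W where "W = (\<lambda>x. x v* E) ` U"
  have iE: "invertible E" using assms(5) by (simp add: invertible_det_nz)
  have dU: "vec.dim U + 1 \<le> n" unfolding U_def using dimU[OF assms(1-4)] .
  have sU: "vec.subspace U"
  proof -
    have "U = (\<lambda>x. x v* (?t - mat 1)) ` UNIV" by (simp add: U_def vector_matrix_mult_diff_rdistrib)
    then show ?thesis using vec.linear_subspace_image[OF lin vec.subspace_UNIV] by simp
  qed
  have sW: "vec.subspace W" unfolding W_def by (rule vec.linear_subspace_image[OF lin sU])
  have dW: "vec.dim W + 1 \<le> n" using vec.dim_image_le[OF lin, of E U] dU unfolding W_def by linarith
  have sV: "vec.subspace (Vsub \<iota> n)" unfolding Vsub_def by simp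
  have dV: "vec.dim (Vsub \<iota> n :: ('a^'d) set) \<le> n"
  proof -
    have "vec.dim (Vsub \<iota> n :: ('a^'d) set) \<le> card (std_basis \<iota> ` {1..n} :: ('a^'d) set)"
      unfolding Vsub_def vec.dim_span by (rule vec.dim_le_card[OF vec.span_superset]) auto
    also have "\<dots> \<le> n" using card_image_le[of "{1..n}" "std_basis \<iota>"] by simp
    finally show ?thesis .
  qed
  have TW: "y v* ?T - y \<in> W" for y
  proof -
    define z where "z = y v* matrix_inv E"
    have "y v* ?T = (z v* ?t) v* E" by (simp add: z_def vector_matrix_mul_assoc)
    moreover have "y = z v* E" by (simp add: z_def inv_vec(2)[OF iE])
    ultimately have "y v* ?T - y = (z v* ?t - z) v* E" by (simp add: vector_matrix_mult_diff_distrib)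
    then show ?thesis unfolding W_def U_def by auto
  qed
  have wd: "invertible ?T" "vec.dim (ssum (Vsub \<iota> n) (img (Vsub \<iota> n) ?T)) = min (2*n-1) CARD('d)"
    using assms(6) by (auto simp: weak_doubling_def nprime_def)
  show ?thesis by (rule core[OF sV sW dV dW wd(1) TW wd(2)])
qed

end
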